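(* For any weighted finite graph $G$ with $N$ vertices and each $1\leq k\leq N$, \[ \overline{h}(k)\geq\frac{1}{2}\bigl(1-h(k)\bigr). \]
   Context: $G=(V,E,w)$ is a finite undirected graph without self-loops, $N=|V|$, positive symmetric edge weights $w_{uv}$ ($w_{uv}=0$ for non-edges), degrees $d_u=\sum_v w_{uv}$ (implicitly positive). $|E(A,B)|:=\sum_{u\in A,v\in B}w_{uv}$, $\mathrm{vol}(A):=\sum_{u\in A}d_u$, $\overline{A}=V\setminus A$. For nonempty $S$, $\phi(S):=|E(S,\overline{S})|/\mathrm{vol}(S)$; $h(k):=\min\max_{1\leq i\leq k}\phi(S_i)$ over all collections of $k$ nonempty pairwise disjoint subsets of $V$. For disjoint $V_1,V_2$ with $V_1\cup V_2\neq\emptyset$, $\overline{\phi}(V_1,V_2):=2|E(V_1,V_2)|/\mathrm{vol}(V_1\cup V_2)$; $\overline{h}(k):=\max\min_{1\leq i\leq k}\overline{\phi}(V_{2i-1},V_{2i})$ over all collections of $k$ pairs $(V_1,V_2),\ldots,(V_{2k-1},V_{2k})$ of pairwise disjoint subsets of $V$ with $V_{2i-1}\cup V_{2i}\neq\emptyset$ for each $i$. *)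

theory Defs
  imports Complex_Main
begin

text \<open>A weighted graph is given by a finite vertex set V and a weight function
  w :: 'a => 'a => real (w u v = 0 for non-edges); all sums range over V.\<close>

definition wgraph :: "'a set \<Rightarrow> ('a \<Rightarrow> 'a \<Rightarrow> real) \<Rightarrow> bool" where
  "wgraph V w \<longleftrightarrow> finite V \<and>
     (\<forall>u\<in>V. \<forall>v\<in>V. w u v = w v u \<and> w u v \<ge> 0) \<and>
     (\<forall>u\<in>V. w u u = 0)"

definition degree :: "'a set \<Rightarrow> ('a \<Rightarrow> 'a \<Rightarrow> real) \<Rightarrow> 'a \<Rightarrow> real" where
  "degree V w u = (\<Sum>v\<in>V. w u v)"

definition cut :: "('a \<Rightarrow> 'a \<Rightarrow> real) \<Rightarrow> 'a set \<Rightarrow> 'a set \<Rightarrow> real" where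
  "cut w A B = (\<Sum>u\<in>A. \<Sum>v\<in>B. w u v)"

definition vol :: "'a set \<Rightarrow> ('a \<Rightarrow> 'a \<Rightarrow> real) \<Rightarrow> 'a set \<Rightarrow> real" where
  "vol V w A = (\<Sum>u\<in>A. degree V w u)"

definition expansion :: "'a set \<Rightarrow> ('a \<Rightarrow> 'a \<Rightarrow> real) \<Rightarrow> 'a set \<Rightarrow> real" where
  "expansion V w S = cut w S (V - S) / vol V w S"

definition bipartiteness :: "'a set \<Rightarrow> ('a \<Rightarrow> 'a \<Rightarrow> real) \<Rightarrow> 'a set \<Rightarrow> 'a set \<Rightarrow> real" where
  "bipartiteness V w A B = 2 * cut w A B / vol V w (A \<union> B)"

definition disjoint_families :: "'a set \<Rightarrow> nat \<Rightarrow> (nat \<Rightarrow> 'a set) set" where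
  "disjoint_families V k = {S. (\<forall>i<k. S i \<subseteq> V \<and> S i \<noteq> {}) \<and>
       (\<forall>i<k. \<forall>j<k. i \<noteq> j \<longrightarrow> S i \<inter> S j = {})}"

definition h_order :: "'a set \<Rightarrow> ('a \<Rightarrow> 'a \<Rightarrow> real) \<Rightarrow> nat \<Rightarrow> real" where
  "h_order V w k = Min {Max {expansion V w (S i) | i. i < k} | S. S \<in> disjoint_families V k}"

definition disjoint_pair_families :: "'a set \<Rightarrow> nat \<Rightarrow> ((nat \<Rightarrow> 'a set) \<times> (nat \<Rightarrow> 'a set)) set" where
  "disjoint_pair_families V k = {(A, B). (\<forall>i<k. A i \<subseteq> V \<and> B i \<subseteq> V \<and> A i \<union> B i \<noteq> {}) \<and>
       (\<forall>i<k. \<forall>j<k. A i \<inter> B j = {}) \<and>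
       (\<forall>i<k. \<forall>j<k. i \<noteq> j \<longrightarrow> A i \<inter> A j = {} \<and> B i \<inter> B j = {})}"

definition hbar_order :: "'a set \<Rightarrow> ('a \<Rightarrow> 'a \<Rightarrow> real) \<Rightarrow> nat \<Rightarrow> real" where
  "hbar_order V w k = Max {Min {bipartiteness V w (A i) (B i) | i. i < k} | A B.
       (A, B) \<in> disjoint_pair_families V k}"

end

theory Submission
  imports Defs "HOL-Library.FuncSet"
begin

lemma maxcut_exists:
  fixes w :: "'a \<Rightarrow> 'a \<Rightarrow> real"
  assumes "finite S" "\<forall>u\<in>S. \<forall>v\<in>S. w u v = w v u" "\<forall>u\<in>S. w u u = 0"
  shows "\<exists>A\<subseteq>S. cut w S S \<le> 4 * cut w A (S - A)"
  using assms
proof (induction S rule: finite_induct)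
  case empty
  then show ?case by (simp add: cut_def)
next
  case (insert x S)
  have p1: "\<forall>u\<in>S. \<forall>v\<in>S. w u v = w v u" using insert.prems(1) by blast
  have p2: "\<forall>u\<in>S. w u u = 0" using insert.prems(2) by blast
  obtain A where A: "A \<subseteq> S" "cut w S S \<le> 4 * cut w A (S - A)" using insert.IH[OF p1 p2] by blast
  define D where "D = (\<Sum>v\<in>S. w x v)"
  define a where "a = (\<Sum>v\<in>A. w v x)"
  define b where "b = (\<Sum>v\<in>S - A. w x v)"
  have symS: "\<And>v. v \<in> S \<Longrightarrow> w v x = w x v" using insert.prems(1) by blast
  have fin: "finite A" "finite (S - A)" using A insert.hyps finite_subset by auto
  have Dab: "D = a + b"
  proof -
    have "D = (\<Sum>v\<in>A. w x v) + (\<Sum>v\<in>S - A. w x v)"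
      unfolding D_def using sum.subset_diff[OF A(1) insert.hyps(1), of "w x"] by simp
    also have "(\<Sum>v\<in>A. w x v) = a" unfolding a_def using A symS by (intro sum.cong) auto
    finally show ?thesis unfolding b_def by simp
  qed
  have cS: "cut w (insert x S) (insert x S) = cut w S S + 2 * D"
  proof -
    have "cut w (insert x S) (insert x S) = (\<Sum>v\<in>insert x S. w x v) + (\<Sum>u\<in>S. \<Sum>v\<in>insert x S. w u v)"
      unfolding cut_def using insert.hyps by simp
    also have "(\<Sum>v\<in>insert x S. w x v) = D" unfolding D_def using insert.hyps insert.prems(2) by simp
    also have "(\<Sum>u\<in>S. \<Sum>v\<in>insert x S. w u v) = (\<Sum>u\<in>S. w u x + (\<Sum>v\<in>S. w u v))"
      using insert.hyps by (intro sum.cong) auto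
    also have "\<dots> = (\<Sum>u\<in>S. w u x) + cut w S S" unfolding cut_def by (simp add: sum.distrib)
    also have "(\<Sum>u\<in>S. w u x) = D" unfolding D_def using symS by (intro sum.cong) auto
    finally show ?thesis by simp
  qed
  show ?case
  proof (cases "a \<ge> b")
    case True
    have "cut w A (insert x S - A) = cut w A (S - A) + a"
    proof -
      have "insert x S - A = insert x (S - A)" using A insert.hyps by auto
      then have "cut w A (insert x S - A) = (\<Sum>u\<in>A. w u x + (\<Sum>v\<in>S - A. w u v))"
        unfolding cut_def using fin insert.hyps by (intro sum.cong) auto
      then show ?thesis unfolding cut_def a_def by (simp add: sum.distrib)
    qed
    then show ?thesis using A cS Dab True by (intro exI[of _ A]) auto
  next
    case False
    have "cut w (insert x A) (insert x S - insert x A) = cut w A (S - A) + b"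
    proof -
      have e: "insert x S - insert x A = S - A" using A insert.hyps by auto
      have "x \<notin> A" using A insert.hyps by auto
      then show ?thesis unfolding e cut_def b_def using fin by simp
    qed
    then show ?thesis using A cS Dab False by (intro exI[of _ "insert x A"]) auto
  qed
qed

lemma vol_split:
  assumes "S \<subseteq> V" "finite V"
  shows "vol V w S = cut w S S + cut w S (V - S)"
proof -
  have "vol V w S = (\<Sum>u\<in>S. (\<Sum>v\<in>S. w u v) + (\<Sum>v\<in>V - S. w u v))"
    unfolding vol_def degree_def using assms
    by (intro sum.cong) (auto simp: sum.subset_diff[of S V])
  then show ?thesis unfolding cut_def by (simp add: sum.distrib)
qed

theorem proposition3p5:
  fixes V :: "'a set" and w :: "'a \<Rightarrow> 'a \<Rightarrow> real" and k :: nat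
  assumes "wgraph V w"
    and "\<forall>u\<in>V. degree V w u > 0"
    and "1 \<le> k" and "k \<le> card V"
  shows "hbar_order V w k \<ge> (1 - h_order V w k) / 2"
proof -
  have fV: "finite V" and sym: "\<forall>u\<in>V. \<forall>v\<in>V. w u v = w v u" and diag: "\<forall>u\<in>V. w u u = 0"
    using assms(1) unfolding wgraph_def by auto
  define g where "g = (\<lambda>S::nat \<Rightarrow> 'a set. Max {expansion V w (S i) | i. i < k})"
  define HS where "HS = {g S | S. S \<in> disjoint_families V k}"
  have h_eq: "h_order V w k = Min HS" unfolding h_order_def HS_def g_def by simp
  have img: "\<And>f::nat \<Rightarrow> real. {f i | i. i < k} = f ` {..<k}" by auto
  have grestr: "g (restrict S {..<k}) = g S" for S
    unfolding g_def img by (intro arg_cong[where f=Max] image_cong) auto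
  have HSfin: "finite HS"
  proof (rule finite_subset)
    show "HS \<subseteq> g ` (PiE {..<k} (\<lambda>_. Pow V))"
    proof
      fix x assume "x \<in> HS"
      then obtain S where S: "x = g S" "S \<in> disjoint_families V k" unfolding HS_def by auto
      have "restrict S {..<k} \<in> PiE {..<k} (\<lambda>_. Pow V)"
        using S(2) unfolding disjoint_families_def by auto
      moreover have "x = g (restrict S {..<k})" using grestr S(1) by simp
      ultimately show "x \<in> g ` (PiE {..<k} (\<lambda>_. Pow V))" by blast
    qed
    show "finite (g ` (PiE {..<k} (\<lambda>_. Pow V)))" using fV by (intro finite_imageI finite_PiE) auto
  qed
  obtain f where f: "bij_betw f {0..<card V} V" using ex_bij_betw_nat_finite[OF fV] by blast
  have "(\<lambda>i. {f i}) \<in> disjoint_families V k"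
  proof -
    have fi: "f i \<in> V" if "i < k" for i
      using f that assms(4) bij_betw_apply by fastforce
    have fij: "f i \<noteq> f j" if "i < k" "j < k" "i \<noteq> j" for i j
      using f that assms(4) unfolding bij_betw_def inj_on_def by auto
    show ?thesis unfolding disjoint_families_def using fi fij by auto
  qed
  then have HSne: "HS \<noteq> {}" unfolding HS_def by auto
  have "Min HS \<in> HS" using HSfin HSne by simp
  then obtain S where S0: "S \<in> disjoint_families V k" "Min HS = g S"
    unfolding HS_def by blast
  have S: "S \<in> disjoint_families V k" "h_order V w k = g S" using S0 h_eq by simp_all
  have Ssub: "\<And>i. i < k \<Longrightarrow> S i \<subseteq> V" and Sne: "\<And>i. i < k \<Longrightarrow> S i \<noteq> {}"
    and Sdisj: "\<And>i j. i < k \<Longrightarrow> j < k \<Longrightarrow> i \<noteq> j \<Longrightarrow> S i \<inter> S j = {}"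
    using S(1) unfolding disjoint_families_def by auto
  have exp_le: "expansion V w (S i) \<le> h_order V w k" if "i < k" for i
    unfolding S(2) g_def img using that by (intro Max_ge) auto
  have "\<forall>i. \<exists>A. i < k \<longrightarrow> A \<subseteq> S i \<and> cut w (S i) (S i) \<le> 4 * cut w A (S i - A)"
  proof
    fix i show "\<exists>A. i < k \<longrightarrow> A \<subseteq> S i \<and> cut w (S i) (S i) \<le> 4 * cut w A (S i - A)"
    proof (cases "i < k")
      case True
      have "finite (S i)" using Ssub[OF True] fV finite_subset by auto
      moreover have "\<forall>u\<in>S i. \<forall>v\<in>S i. w u v = w v u" "\<forall>u\<in>S i. w u u = 0"
        using Ssub[OF True] sym diag by auto
      ultimately show ?thesis using maxcut_exists[of "S i" w] by blast
    qed auto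
  qed
  from choice[OF this] obtain A where
    A0: "\<forall>i. i < k \<longrightarrow> A i \<subseteq> S i \<and> cut w (S i) (S i) \<le> 4 * cut w (A i) (S i - A i)"
    by blast
  have A: "\<And>i. i < k \<Longrightarrow> A i \<subseteq> S i \<and> cut w (S i) (S i) \<le> 4 * cut w (A i) (S i - A i)"
    using A0 by blast
  define B where "B = (\<lambda>i. S i - A i)"
  have AB1: "\<forall>i<k. A i \<subseteq> V \<and> B i \<subseteq> V \<and> A i \<union> B i \<noteq> {}"
  proof (intro allI impI conjI)
    fix i assume i: "i < k"
    show "A i \<subseteq> V" using A[OF i] Ssub[OF i] by auto
    show "B i \<subseteq> V" using Ssub[OF i] unfolding B_def by auto
    show "A i \<union> B i \<noteq> {}" using A[OF i] Sne[OF i] unfolding B_def by auto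
  qed
  have AB2: "\<forall>i<k. \<forall>j<k. A i \<inter> B j = {}"
  proof (intro allI impI)
    fix i j assume i: "i < k" and j: "j < k"
    show "A i \<inter> B j = {}"
    proof (cases "i = j")
      case True then show ?thesis unfolding B_def by auto
    next
      case False
      have "A i \<subseteq> S i" using A[OF i] by simp
      moreover have "B j \<subseteq> S j" unfolding B_def by auto
      ultimately show ?thesis using Sdisj[OF i j False] by blast
    qed
  qed
  have AB3: "\<forall>i<k. \<forall>j<k. i \<noteq> j \<longrightarrow> A i \<inter> A j = {} \<and> B i \<inter> B j = {}"
  proof (intro allI impI)
    fix i j assume i: "i < k" and j: "j < k" and ij: "i \<noteq> j"
    have "A i \<subseteq> S i" "A j \<subseteq> S j" using A[OF i] A[OF j] by simp_all
    moreover have "B i \<subseteq> S i" "B j \<subseteq> S j" unfolding B_def by auto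
    ultimately show "A i \<inter> A j = {} \<and> B i \<inter> B j = {}" using Sdisj[OF i j ij] by blast
  qed
  have AB: "(A, B) \<in> disjoint_pair_families V k"
    unfolding disjoint_pair_families_def using AB1 AB2 AB3 by simp
  have bip: "(1 - h_order V w k) / 2 \<le> bipartiteness V w (A i) (B i)" if i: "i < k" for i
  proof -
    have AuB: "A i \<union> B i = S i" using A[OF i] unfolding B_def by auto
    have finS: "finite (S i)" using Ssub[OF i] fV finite_subset by auto
    have vpos: "vol V w (S i) > 0" unfolding vol_def
      using Ssub[OF i] Sne[OF i] assms(2) finS by (intro sum_pos) auto
    have vs: "vol V w (S i) = cut w (S i) (S i) + cut w (S i) (V - S i)"
      using vol_split[OF Ssub[OF i] fV] .
    have "(1 - h_order V w k) / 2 \<le> (1 - expansion V w (S i)) / 2" using exp_le[OF i] by simp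
    also have "\<dots> = cut w (S i) (S i) / (2 * vol V w (S i))"
      unfolding expansion_def using vpos vs by (simp add: field_simps)
    also have "\<dots> \<le> 2 * cut w (A i) (B i) / vol V w (S i)"
      using A[OF i] vpos unfolding B_def by (simp add: field_simps)
    finally show ?thesis unfolding bipartiteness_def AuB .
  qed
  define g2 where "g2 = (\<lambda>(A::nat \<Rightarrow> 'a set, B::nat \<Rightarrow> 'a set). Min {bipartiteness V w (A i) (B i) | i. i < k})"
  define HB where "HB = {g2 (A, B) | A B. (A, B) \<in> disjoint_pair_families V k}"
  have hb_eq: "hbar_order V w k = Max HB" unfolding hbar_order_def HB_def g2_def by simp
  have g2restr: "g2 (restrict A' {..<k}, restrict B' {..<k}) = g2 (A', B')" for A' B'
    unfolding g2_def img case_prod_conv by (intro arg_cong[where f=Min] image_cong) auto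
  have HBfin: "finite HB"
  proof (rule finite_subset)
    show "HB \<subseteq> g2 ` (PiE {..<k} (\<lambda>_. Pow V) \<times> PiE {..<k} (\<lambda>_. Pow V))"
    proof
      fix x assume "x \<in> HB"
      then obtain A' B' where S: "x = g2 (A', B')" "(A', B') \<in> disjoint_pair_families V k"
        unfolding HB_def by blast
      have "\<forall>i<k. A' i \<subseteq> V \<and> B' i \<subseteq> V"
        using S(2) unfolding disjoint_pair_families_def by blast
      then have "(restrict A' {..<k}, restrict B' {..<k}) \<in> PiE {..<k} (\<lambda>_. Pow V) \<times> PiE {..<k} (\<lambda>_. Pow V)"
        by auto
      moreover have "x = g2 (restrict A' {..<k}, restrict B' {..<k})"
        using g2restr[of A' B'] S(1) by simp
      ultimately show "x \<in> g2 ` (PiE {..<k} (\<lambda>_. Pow V) \<times> PiE {..<k} (\<lambda>_. Pow V))"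
        by (rule rev_image_eqI)
    qed
    show "finite (g2 ` (PiE {..<k} (\<lambda>_. Pow V) \<times> PiE {..<k} (\<lambda>_. Pow V)))"
      using fV by (intro finite_imageI finite_cartesian_product finite_PiE) auto
  qed
  have "g2 (A, B) \<in> HB" unfolding HB_def using AB by blast
  then have "g2 (A, B) \<le> hbar_order V w k" unfolding hb_eq using HBfin by simp
  moreover have "(1 - h_order V w k) / 2 \<le> g2 (A, B)"
    unfolding g2_def img using bip assms(3) by (simp only: case_prod_conv) (intro Min.boundedI, auto simp: lessThan_empty_iff)
  ultimately show ?thesis by linarith
qed

end
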